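(* Let $A\in\{\mathbb Z,\mathbb R\}$ and let $K,X\subset\mathbb R^d$ be $d$-dimensional convex bodies. If $K$ is $A$-$X$-free and inclusion-maximal among $A$-$X$-free convex bodies, then $K$ contains an $A$-unimodular copy of $X$.
   Context: A convex body is a nonempty compact convex subset of $\mathbb R^d$. An $A$-unimodular transformation is a map $T(x)=Mx+b$ with $M\in \mathrm{GL}_d(\mathbb Z)$ and $b\in A^d$; an $A$-unimodular copy of $X$ is $T(X)$ for such a $T$. A convex set is $A$-$X$-free if its relative interior contains no $A$-unimodular copy of $X$. *)

theory Defs
  imports "HOL-Analysis.Analysis"
begin

definition convex_body :: "(real^'n) set \<Rightarrow> bool" where
  "convex_body K \<longleftrightarrow> K \<noteq> {} \<and> compact K \<and> convex K"

definition GL_int :: "real^'n^'n \<Rightarrow> bool" where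
  "GL_int M \<longleftrightarrow> (\<forall>i j. M $ i $ j \<in> \<int>) \<and> (det M = 1 \<or> det M = -1)"

definition unimod_copy :: "real set \<Rightarrow> (real^'n) set \<Rightarrow> (real^'n) set \<Rightarrow> bool" where
  "unimod_copy A X Y \<longleftrightarrow>
     (\<exists>M b. GL_int M \<and> (\<forall>i. b $ i \<in> A) \<and> Y = (\<lambda>x. M *v x + b) ` X)"

definition X_free :: "real set \<Rightarrow> (real^'n) set \<Rightarrow> (real^'n) set \<Rightarrow> bool" where
  "X_free A X K \<longleftrightarrow> convex K \<and> \<not> (\<exists>Y. unimod_copy A X Y \<and> Y \<subseteq> rel_interior K)"

end

theory Submission
  imports Defs
begin

definition enl :: "(real^'n) set \<Rightarrow> real \<Rightarrow> (real^'n) set" where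
  "enl K d = (\<Union>k\<in>K. \<Union>e\<in>cball 0 d. {k + e})"

lemma enl_body:
  fixes K :: "(real^'n) set"
  assumes "convex_body K" "d > 0"
  shows "convex_body (enl K d)" "K \<subseteq> enl K d" "enl K d \<noteq> K"
proof -
  have cK: "compact K" "convex K" "K \<noteq> {}" using assms(1) by (auto simp: convex_body_def)
  have eq: "enl K d = {x + y |x y. x \<in> K \<and> y \<in> cball 0 d}" unfolding enl_def by blast
  have "compact (enl K d)" unfolding eq
    using compact_sums[OF cK(1) compact_cball[of 0 d]] .
  moreover have "convex (enl K d)" unfolding enl_def
    by (rule convex_sums) (use cK in auto)
  moreover show sub: "K \<subseteq> enl K d"
  proof
    fix k assume "k \<in> K"
    moreover have "(0::real^'n) \<in> cball 0 d" using assms(2) by simp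
    ultimately show "k \<in> enl K d" unfolding eq by force
  qed
  ultimately show "convex_body (enl K d)" using cK by (auto simp: convex_body_def)
  obtain i0 :: 'n where True by simp
  have "continuous_on K (\<lambda>x. x $ i0)" by (intro continuous_intros)
  then obtain p where p: "p \<in> K" "\<forall>y\<in>K. y $ i0 \<le> p $ i0"
    using continuous_attains_sup[OF cK(1) cK(3)] by blast
  define q where "q = p + d *\<^sub>R axis i0 1"
  have "d *\<^sub>R axis i0 1 \<in> cball (0::real^'n) d" using assms(2) by simp
  then have "q \<in> enl K d" unfolding eq q_def using p(1) by blast
  moreover have "q $ i0 > p $ i0" using assms(2) by (simp add: q_def)
  then have "q \<notin> K" using p(2) by force
  ultimately show "enl K d \<noteq> K" by blast
qed

lemma enl_infdist:
  fixes K :: "(real^'n) set"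
  assumes "y \<in> enl K d"
  shows "infdist y K \<le> d"
proof -
  obtain k e where "k \<in> K" "norm e \<le> d" "y = k + e" using assms unfolding enl_def by auto
  then have "infdist y K \<le> dist y k" by (simp add: infdist_le)
  also have "\<dots> = norm e" using \<open>y = k + e\<close> by (simp add: dist_norm)
  finally show ?thesis using \<open>norm e \<le> d\<close> by linarith
qed

lemma enl_norm:
  fixes K :: "(real^'n) set"
  assumes "y \<in> enl K d" "\<forall>k\<in>K. norm k \<le> D0"
  shows "norm y \<le> D0 + d"
proof -
  obtain k e where "k \<in> K" "norm e \<le> d" "y = k + e" using assms unfolding enl_def by auto
  then show ?thesis using assms(2) norm_triangle_ineq[of k e] by force
qed

lemma coef_bound:
  fixes M :: "real^'n^'n" and b c :: "real^'n"
  assumes nb: "\<forall>x\<in>X. norm (M *v x + b) \<le> D" and bl: "ball c r \<subseteq> X" and r: "r > 0"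
  shows "\<bar>M$i$j\<bar> \<le> 2*D/r"
proof -
  define t where "t = r/2"
  have t: "t > 0" "t < r" using r by (auto simp: t_def)
  define u :: "real^'n" where "u = axis j 1"
  have "c + t *\<^sub>R u \<in> X" "c - t *\<^sub>R u \<in> X" using bl t
    by (auto simp: u_def dist_norm subset_iff)
  then have h1: "\<bar>(M *v (c + t *\<^sub>R u) + b) $ i\<bar> \<le> D" and h2: "\<bar>(M *v (c - t *\<^sub>R u) + b) $ i\<bar> \<le> D"
    using nb component_le_norm_cart order_trans by blast+
  have eq: "(M *v (c + t *\<^sub>R u) + b) $ i - (M *v (c - t *\<^sub>R u) + b) $ i = 2 * t * M$i$j"
    by (simp add: matrix_vector_mul_component inner_add_right inner_diff_right u_def inner_axis)
  have "\<bar>2 * t * M$i$j\<bar> \<le> 2 * D" using h1 h2 unfolding eq[symmetric] by linarith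
  then have "2 * t * \<bar>M$i$j\<bar> \<le> 2 * D" using t by (simp add: abs_mult)
  then show "\<bar>M$i$j\<bar> \<le> 2*D/r" using t unfolding t_def by (simp add: field_simps)
qed

lemma coef_bound_b:
  fixes M :: "real^'n^'n" and b c :: "real^'n"
  assumes nb: "\<forall>x\<in>X. norm (M *v x + b) \<le> D" and bl: "ball c r \<subseteq> X" and r: "r > 0"
  shows "\<bar>b$i\<bar> \<le> D + (\<Sum>j\<in>UNIV. (2*D/r) * \<bar>c$j\<bar>)"
proof -
  have bM': "\<And>j. \<bar>M$i$j\<bar> \<le> 2*D/r" using coef_bound[OF assms] by blast
  have hc: "\<bar>(M *v c + b) $ i\<bar> \<le> D" using nb bl r component_le_norm_cart order_trans
    by (meson centre_in_ball subsetD)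
  have "\<bar>M$i \<bullet> c\<bar> = \<bar>\<Sum>j\<in>UNIV. M$i$j * c$j\<bar>" by (simp add: inner_vec_def)
  also have "\<dots> \<le> (\<Sum>j\<in>UNIV. \<bar>M$i$j * c$j\<bar>)" by (rule sum_abs)
  also have "\<dots> \<le> (\<Sum>j\<in>UNIV. (2*D/r) * \<bar>c$j\<bar>)"
    by (rule sum_mono) (metis abs_mult abs_ge_zero bM' mult_right_mono)
  finally have "\<bar>M$i \<bullet> c\<bar> \<le> (\<Sum>j\<in>UNIV. (2*D/r) * \<bar>c$j\<bar>)" .
  then show "\<bar>b$i\<bar> \<le> D + (\<Sum>j\<in>UNIV. (2*D/r) * \<bar>c$j\<bar>)" using hc
    by (simp add: matrix_vector_mul_component)
qed

lemma tendsto_det: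
  fixes F :: "nat \<Rightarrow> real^'n^'n"
  assumes "F \<longlonglongrightarrow> M0"
  shows "(\<lambda>n. det (F n)) \<longlonglongrightarrow> det M0"
  unfolding det_def by (intro tendsto_intros assms)

lemma tendsto_mv:
  fixes F :: "nat \<Rightarrow> real^'n^'n" and B :: "nat \<Rightarrow> real^'n"
  assumes "F \<longlonglongrightarrow> M0" "B \<longlonglongrightarrow> b0"
  shows "(\<lambda>n. F n *v x + B n) \<longlonglongrightarrow> M0 *v x + b0"
  by (rule vec_tendstoI) (simp add: matrix_vector_mul_component, intro tendsto_intros assms)

theorem corollary2p8:
  fixes A :: "real set" and K X :: "(real^'n) set"
  assumes A: "A = \<int> \<or> A = UNIV"
    and K: "convex_body K" "aff_dim K = int CARD('n)"
    and X: "convex_body X" "aff_dim X = int CARD('n)"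
    and free: "X_free A X K"
    and maximal: "\<forall>L. convex_body L \<and> X_free A X L \<and> K \<subseteq> L \<longrightarrow> L = K"
  shows "\<exists>Y. unimod_copy A X Y \<and> Y \<subseteq> K"
proof (rule ccontr)
  assume nY: "\<not> ?thesis"
  define d :: "nat \<Rightarrow> real" where "d n = inverse (real (Suc n))" for n
  have dpos: "d n > 0" for n by (simp add: d_def)
  have dle: "d n \<le> 1" for n unfolding d_def by (rule inverse_le_1_iff[THEN iffD2]) simp
  have "\<exists>Mb. GL_int (fst Mb) \<and> (\<forall>i. snd Mb $ i \<in> A) \<and>
          (\<lambda>x. fst Mb *v x + snd Mb) ` X \<subseteq> enl K (d n)" for n
  proof -
    note E = enl_body[OF K(1) dpos[of n]]
    have "\<not> X_free A X (enl K (d n))" using maximal E by blast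
    then obtain Y where "unimod_copy A X Y" "Y \<subseteq> rel_interior (enl K (d n))"
      using E(1) unfolding X_free_def convex_body_def by blast
    then obtain M b where "GL_int M" "\<forall>i. b $ i \<in> A" "Y = (\<lambda>x. M *v x + b) ` X"
        "Y \<subseteq> enl K (d n)"
      unfolding unimod_copy_def using rel_interior_subset by blast
    then show ?thesis by (intro exI[of _ "(M, b)"]) auto
  qed
  then obtain f where f: "\<And>n. GL_int (fst (f n))" "\<And>n. \<forall>i. snd (f n) $ i \<in> A"
      "\<And>n. (\<lambda>x. fst (f n) *v x + snd (f n)) ` X \<subseteq> enl K (d n)"
    by metis
  have "bounded K" using K(1) by (simp add: convex_body_def compact_imp_bounded)
  then obtain D0 where D0: "\<forall>k\<in>K. norm k \<le> D0" by (meson bounded_iff)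
  define D where "D = D0 + 1"
  have nb: "\<forall>x\<in>X. norm (fst (f n) *v x + snd (f n)) \<le> D" for n
  proof
    fix x assume "x \<in> X"
    then have "fst (f n) *v x + snd (f n) \<in> enl K (d n)" using f(3) by blast
    then show "norm (fst (f n) *v x + snd (f n)) \<le> D"
      using enl_norm[OF _ D0] dle[of n] unfolding D_def by force
  qed
  have "interior X \<noteq> {}"
  proof -
    have "rel_interior X \<noteq> {}" using X(1) by (simp add: convex_body_def rel_interior_eq_empty)
    moreover have "aff_dim X = int DIM(real^'n)" using X(2) by simp
    ultimately show ?thesis by (simp add: interior_rel_interior_gen)
  qed
  then obtain c where "c \<in> interior X" by blast
  then obtain r where r: "r > 0" "ball c r \<subseteq> X" by (meson mem_interior)
  define B where "B = 2*D/r"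
  define C where "C = D + (\<Sum>j\<in>UNIV. (2*D/r) * \<bar>c$j\<bar>)"
  define S1 where "S1 = {M::real^'n^'n. \<forall>i j. \<bar>M$i$j\<bar> \<le> B}"
  define S2 where "S2 = {b::real^'n. \<forall>i. \<bar>b$i\<bar> \<le> C}"
  have "range f \<subseteq> S1 \<times> S2"
  proof
    fix z assume "z \<in> range f"
    then obtain n where "z = f n" by blast
    then show "z \<in> S1 \<times> S2"
      using coef_bound[OF nb[of n] r(2) r(1)] coef_bound_b[OF nb[of n] r(2) r(1)]
      unfolding S1_def S2_def B_def C_def by (simp add: mem_Times_iff)
  qed
  moreover have "bounded S2"
  proof -
    have "norm b \<le> real CARD('n) * C" if "b \<in> S2" for b
    proof -
      have "norm b \<le> (\<Sum>i\<in>UNIV. \<bar>b$i\<bar>)" by (rule norm_le_l1_cart)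
      also have "\<dots> \<le> (\<Sum>i\<in>(UNIV::'n set). C)" by (rule sum_mono) (use that in \<open>simp add: S2_def\<close>)
      finally show ?thesis by simp
    qed
    then show ?thesis unfolding bounded_iff by blast
  qed
  moreover have "bounded S1"
  proof -
    have "norm M \<le> real CARD('n) * (real CARD('n) * B)" if "M \<in> S1" for M
    proof -
      have "norm M \<le> (\<Sum>i\<in>UNIV. \<bar>norm (M$i)\<bar>)" unfolding norm_vec_def by (simp add: L2_set_le_sum)
      also have "\<dots> \<le> (\<Sum>i\<in>(UNIV::'n set). real CARD('n) * B)"
      proof (rule sum_mono)
        fix i
        have "\<bar>norm (M$i)\<bar> = norm (M$i)" by simp
        also have "\<dots> \<le> (\<Sum>j\<in>UNIV. \<bar>M$i$j\<bar>)" by (rule norm_le_l1_cart)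
        also have "\<dots> \<le> (\<Sum>j\<in>(UNIV::'n set). B)" by (rule sum_mono) (use that in \<open>simp add: S1_def\<close>)
        finally show "\<bar>norm (M$i)\<bar> \<le> real CARD('n) * B" by simp
      qed
      finally show ?thesis by simp
    qed
    then show ?thesis unfolding bounded_iff by blast
  qed
  ultimately have "bounded (range f)" using bounded_Times bounded_subset by blast
  then obtain l s where s: "strict_mono s" "(f \<circ> s) \<longlonglongrightarrow> l"
    using bounded_imp_convergent_subsequence by blast
  define M0 where "M0 = fst l"
  define b0 where "b0 = snd l"
  have tM: "(\<lambda>n. fst (f (s n))) \<longlonglongrightarrow> M0"
    using tendsto_fst[OF s(2)] unfolding M0_def by (simp add: o_def)
  have tb: "(\<lambda>n. snd (f (s n))) \<longlonglongrightarrow> b0"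
    using tendsto_snd[OF s(2)] unfolding b0_def by (simp add: o_def)
  have "GL_int M0"
  proof -
    have "M0 $ i $ j \<in> \<int>" for i j
      by (rule Lim_in_closed_set[of "\<int>" "\<lambda>n. fst (f (s n)) $ i $ j"])
         (use f(1) in \<open>auto simp: GL_int_def intro!: tendsto_intros tM\<close>)
    moreover have "det M0 \<in> {1, -1}"
    proof (rule Lim_in_closed_set[of "{1,-1}" "\<lambda>n. det (fst (f (s n)))" sequentially])
      show "\<forall>\<^sub>F n in sequentially. det (fst (f (s n))) \<in> {1, - 1}"
        using f(1) by (auto simp: GL_int_def)
    qed (auto intro: tendsto_det[OF tM])
    ultimately show ?thesis by (auto simp: GL_int_def)
  qed
  moreover have "\<forall>i. b0 $ i \<in> A"
  proof
    fix i
    have "closed A" using A by auto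
    then show "b0 $ i \<in> A"
      by (rule Lim_in_closed_set[of A "\<lambda>n. snd (f (s n)) $ i"])
         (use f(2) in \<open>auto intro!: tendsto_intros tb\<close>)
  qed
  moreover have "(\<lambda>x. M0 *v x + b0) ` X \<subseteq> K"
  proof
    fix y assume "y \<in> (\<lambda>x. M0 *v x + b0) ` X"
    then obtain x where x: "x \<in> X" "y = M0 *v x + b0" by blast
    have ty: "(\<lambda>n. fst (f (s n)) *v x + snd (f (s n))) \<longlonglongrightarrow> y"
      unfolding x(2) by (rule tendsto_mv[OF tM tb])
    have ti: "(\<lambda>n. infdist (fst (f (s n)) *v x + snd (f (s n))) K) \<longlonglongrightarrow> infdist y K"
      by (intro tendsto_intros ty)
    have td: "(\<lambda>n. d (s n)) \<longlonglongrightarrow> 0"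
      using LIMSEQ_subseq_LIMSEQ[OF LIMSEQ_inverse_real_of_nat s(1)] by (simp add: d_def o_def)
    have "infdist (fst (f (s n)) *v x + snd (f (s n))) K \<le> d (s n)" for n
      using f(3)[of "s n"] x(1) by (intro enl_infdist) blast
    then have "infdist y K \<le> 0"
      using tendsto_le[OF trivial_limit_sequentially td ti] by simp
    moreover have "closed K" "K \<noteq> {}" using K(1) by (auto simp: convex_body_def compact_imp_closed)
    ultimately show "y \<in> K" using in_closed_iff_infdist_zero infdist_nonneg by (metis order.antisym)
  qed
  ultimately show False using nY unfolding unimod_copy_def by blast
qed

end
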